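(* Let $d\ge1$, let $\Sigma_{\mathrm{aug}}$ be a symmetric positive definite $d\times d$ matrix, let $C\ge1$, $\pi_1,\dots,\pi_C\in[0,1]$ with $\sum_c\pi_c=1$, $\mu_1,\dots,\mu_C\in\mathbb{R}^d$, and $\Sigma_1,\dots,\Sigma_C$ symmetric positive definite $d\times d$ matrices. Let the prior on $\bar z=(z,z')$ be $$p_\psi(\bar z)=\varphi\big(0;\,z-z',\,2\Sigma_{\mathrm{aug}}\big)\sum_{c=1}^C\pi_c\,\varphi\Big(\tfrac{z+z'}{2};\,\mu_c,\,\Sigma_c+\tfrac12\Sigma_{\mathrm{aug}}\Big).$$ Let $\mu_x,\mu_{x'}\in\mathbb{R}^d$, let $\Sigma_x,\Sigma_{x'}$ be positive definite diagonal $d\times d$ matrices, and let $q(\bar z\mid\bar x)=\varphi(z;\mu_x,\Sigma_x)\,\varphi(z';\mu_{x'},\Sigma_{x'})$. Let $p_\theta(\bar x\mid\bar z)$ be a conditional likelihood and $\mathcal{L}(\bar x)=\mathbb{E}_{\bar z\sim q(\bar z\mid\bar x)}[\log p_\theta(\bar x\mid\bar z)]-D_{\mathrm{KL}}(q(\bar z\mid\bar x)\,\|\,p_\psi(\bar z))$. Then $$\mathcal{L}(\bar x)=\mathbb{E}_{q(\bar z\mid\bar x)}\big[\log p_\theta(\bar x\mid\bar z)\big]+\mathbb{E}_{q(\bar z\mid\bar x)}\Big[\log\sum_{c=1}^C\pi_c\,\varphi\Big(\tfrac{z+z'}{2};\mu_c,\Sigma_c+\tfrac12\Sigma_{\mathrm{aug}}\Big)\Big]$$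 $$-\tfrac14\Big\{\operatorname{Tr}\big(\Sigma_{\mathrm{aug}}^{-1}(\Sigma_x+\Sigma_{x'})\big)+(\mu_x-\mu_{x'})^\top\Sigma_{\mathrm{aug}}^{-1}(\mu_x-\mu_{x'})\Big\}+\tfrac12\big(\log\det\Sigma_x+\log\det\Sigma_{x'}\big)+d+\tfrac d2\log\pi-\tfrac12\log\det\Sigma_{\mathrm{aug}}.$$
   Context: For $v,m\in\mathbb{R}^d$ and a symmetric positive definite matrix $S$, $\varphi(v;m,S)=\exp(-\tfrac12(v-m)^\top S^{-1}(v-m))/\sqrt{\det(2\pi S)}$ is the Gaussian density. $\bar x=(x,x')$ is a pair of data points, and $D_{\mathrm{KL}}(q\|p)=\mathbb{E}_q[\log q-\log p]$. This prior is the marginal of $\int\varphi(z;\tilde z,\Sigma_{\mathrm{aug}})\varphi(z';\tilde z,\Sigma_{\mathrm{aug}})\sum_c\pi_c\varphi(\tilde z;\mu_c,\Sigma_c)\,d\tilde z$. *)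

theory Defs
  imports "HOL-Analysis.Analysis"
begin

definition sym_posdef :: "real^'n^'n \<Rightarrow> bool" where
  "sym_posdef S \<longleftrightarrow> transpose S = S \<and> (\<forall>x. x \<noteq> 0 \<longrightarrow> x \<bullet> (S *v x) > 0)"

definition posdef_diag :: "real^'n^'n \<Rightarrow> bool" where
  "posdef_diag S \<longleftrightarrow> (\<forall>i j. i \<noteq> j \<longrightarrow> S$i$j = 0) \<and> (\<forall>i. S$i$i > 0)"

definition gauss_pdf :: "real^'n \<Rightarrow> real^'n \<Rightarrow> real^'n^'n \<Rightarrow> real" where
  "gauss_pdf v m S =
     exp (- (1/2) * ((v - m) \<bullet> (matrix_inv S *v (v - m)))) / sqrt (det ((2 * pi) *\<^sub>R S))"

definition expect :: "('a::euclidean_space \<Rightarrow> real) \<Rightarrow> ('a \<Rightarrow> real) \<Rightarrow> real" where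
  "expect q f = (\<integral>z. q z * f z \<partial>lborel)"

definition KL_div :: "('a::euclidean_space \<Rightarrow> real) \<Rightarrow> ('a \<Rightarrow> real) \<Rightarrow> real" where
  "KL_div q p = expect q (\<lambda>z. ln (q z) - ln (p z))"

definition mix_term ::
  "real^'n^'n \<Rightarrow> nat \<Rightarrow> (nat \<Rightarrow> real) \<Rightarrow> (nat \<Rightarrow> real^'n) \<Rightarrow> (nat \<Rightarrow> real^'n^'n)
     \<Rightarrow> ((real^'n) \<times> (real^'n)) \<Rightarrow> real" where
  "mix_term Saug C pic mu Sc zz =
     (\<Sum>c<C. pic c * gauss_pdf ((1/2) *\<^sub>R (fst zz + snd zz)) (mu c) (Sc c + (1/2) *\<^sub>R Saug))"

definition prior_psi ::
  "real^'n^'n \<Rightarrow> nat \<Rightarrow> (nat \<Rightarrow> real) \<Rightarrow> (nat \<Rightarrow> real^'n) \<Rightarrow> (nat \<Rightarrow> real^'n^'n)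
     \<Rightarrow> ((real^'n) \<times> (real^'n)) \<Rightarrow> real" where
  "prior_psi Saug C pic mu Sc zz =
     gauss_pdf 0 (fst zz - snd zz) (2 *\<^sub>R Saug) * mix_term Saug C pic mu Sc zz"

definition q_post :: "real^'n \<Rightarrow> real^'n^'n \<Rightarrow> real^'n \<Rightarrow> real^'n^'n \<Rightarrow> ((real^'n) \<times> (real^'n)) \<Rightarrow> real" where
  "q_post mx Sx mx' Sx' zz = gauss_pdf (fst zz) mx Sx * gauss_pdf (snd zz) mx' Sx'"

definition elbo :: "('x \<Rightarrow> 'z::euclidean_space \<Rightarrow> real) \<Rightarrow> 'x \<Rightarrow> ('z \<Rightarrow> real) \<Rightarrow> ('z \<Rightarrow> real) \<Rightarrow> real" where
  "elbo ptheta xbar q p = expect q (\<lambda>z. ln (ptheta xbar z)) - KL_div q p"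

end

theory Submission
  imports Defs "HOL-Probability.Probability"
begin

lemma matrix_inv_eq:
  fixes A B :: "real^'n^'n"
  assumes "A ** B = mat 1" "B ** A = mat 1"
  shows "matrix_inv A = B"
proof -
  have ex: "\<exists>A'. A ** A' = mat 1 \<and> A' ** A = mat 1" using assms by blast
  define B' where "B' = matrix_inv A"
  have h: "A ** B' = mat 1 \<and> B' ** A = mat 1"
    unfolding B'_def matrix_inv_def by (rule someI_ex[OF ex])
  have "B' = B' ** (A ** B)" using assms by (simp add: matrix_mul_rid)
  also have "\<dots> = (B' ** A) ** B" by (simp add: matrix_mul_assoc)
  also have "\<dots> = B" using h by (simp add: matrix_mul_lid)
  finally show ?thesis unfolding B'_def .
qed

lemma posdef_inj:
  fixes S :: "real^'n^'n"
  assumes "\<forall>x. x \<noteq> 0 \<longrightarrow> x \<bullet> (S *v x) > 0"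
  shows "inj ((*v) S)"
proof -
  have "S *v x = 0 \<Longrightarrow> x = 0" for x using assms by force
  then show ?thesis
    by (metis (no_types, lifting) injI matrix_vector_mult_diff_distrib right_minus_eq)
qed

lemma posdef_det_nz:
  fixes S :: "real^'n^'n"
  assumes "\<forall>x. x \<noteq> 0 \<longrightarrow> x \<bullet> (S *v x) > 0"
  shows "det S \<noteq> 0"
  using det_nz_iff_inj[OF matrix_vector_mul_linear[of S]] posdef_inj[OF assms]
  by (simp add: matrix_of_matrix_vector_mul)

lemma posdef_invertible:
  fixes S :: "real^'n^'n"
  assumes "\<forall>x. x \<noteq> 0 \<longrightarrow> x \<bullet> (S *v x) > 0"
  shows "invertible S"
  using posdef_det_nz[OF assms] invertible_det_nz by blast

lemma posdef_det_pos:
  fixes S :: "real^'n^'n"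
  assumes pd: "\<forall>x. x \<noteq> 0 \<longrightarrow> x \<bullet> (S *v x) > 0"
  shows "det S > 0"
proof (rule ccontr)
  assume "\<not> det S > 0"
  hence le: "det S \<le> 0" by simp
  define M where "M t = (1 - t) *\<^sub>R (mat 1 :: real^'n^'n) + t *\<^sub>R S" for t :: real
  have cont: "continuous_on {0..1} (\<lambda>t. det (M t))"
    unfolding M_def det_def
    by (auto simp: mat_def intro!: continuous_intros)
  have "det (M 1) \<le> 0" "0 \<le> det (M 0)" using le by (auto simp: M_def)
  then obtain t where t: "0 \<le> t" "t \<le> 1" "det (M t) = 0"
    using IVT2'[of "\<lambda>t. det (M t)" 1 0 0, OF _ _ _ cont] by auto
  have "\<forall>x. x \<noteq> 0 \<longrightarrow> x \<bullet> (M t *v x) > 0"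
  proof (intro allI impI)
    fix x :: "real^'n" assume "x \<noteq> 0"
    have "x \<bullet> (M t *v x) = (1 - t) * (x \<bullet> x) + t * (x \<bullet> (S *v x))"
      by (simp add: M_def matrix_vector_mult_add_rdistrib inner_add_right scaleR_matrix_vector_assoc[symmetric])
    moreover have "x \<bullet> x > 0" using \<open>x \<noteq> 0\<close> by simp
    moreover have "x \<bullet> (S *v x) > 0" using pd \<open>x \<noteq> 0\<close> by simp
    ultimately show "x \<bullet> (M t *v x) > 0" using t
    proof (cases "t = 1")
      case False
      assume e: "x \<bullet> (M t *v x) = (1 - t) * (x \<bullet> x) + t * (x \<bullet> (S *v x))"
        and p1: "x \<bullet> x > 0" and p2: "x \<bullet> (S *v x) > 0"
      have "(1 - t) * (x \<bullet> x) > 0" using False t p1 by simp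
      moreover have "t * (x \<bullet> (S *v x)) \<ge> 0" using t p2 by simp
      ultimately show ?thesis using e by linarith
    qed simp
  qed
  from posdef_det_nz[OF this] t show False by simp
qed

interpretation lborel_prodsf: product_sigma_finite "\<lambda>_. lborel :: real measure"
  by standard

lemma lborel_prod_Basis:
  fixes f :: "'a::euclidean_space \<Rightarrow> real \<Rightarrow> real"
  assumes int: "\<And>b. b \<in> Basis \<Longrightarrow> integrable lborel (f b)"
  shows "integrable lborel (\<lambda>x::'a. \<Prod>b\<in>Basis. f b (x \<bullet> b))"
    and "(\<integral>x. (\<Prod>b\<in>Basis. f b (x \<bullet> b)) \<partial>lborel) = (\<Prod>b\<in>Basis. \<integral>x. f b x \<partial>lborel)"
proof -
  let ?T = "\<lambda>g. \<Sum>b\<in>Basis. g b *\<^sub>R (b::'a)"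
  let ?P = "\<Pi>\<^sub>M b\<in>(Basis::'a set). (lborel::real measure)"
  have Tm: "?T \<in> measurable ?P borel" by measurable
  have fm[measurable]: "f b \<in> borel_measurable borel" if "b \<in> Basis" for b
    using borel_measurable_integrable[OF int[OF that]] by simp
  have Fm: "(\<lambda>x::'a. \<Prod>b\<in>Basis. f b (x \<bullet> b)) \<in> borel_measurable borel"
    by measurable
  have Tb: "?T g \<bullet> b = g b" if "b \<in> Basis" for g b
    using that by (simp add: inner_sum_left inner_Basis if_distrib cong: if_cong)
  have eq: "(\<lambda>g. \<Prod>b\<in>Basis. f b (?T g \<bullet> b)) = (\<lambda>g. \<Prod>b\<in>Basis. f b (g b))"
    by (intro ext prod.cong refl) (simp add: Tb)
  have iP: "integrable ?P (\<lambda>g. \<Prod>b\<in>Basis. f b (g b))"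
    by (rule lborel_prodsf.product_integrable_prod) (auto intro: int)
  show "integrable lborel (\<lambda>x::'a. \<Prod>b\<in>Basis. f b (x \<bullet> b))"
    apply (subst lborel_eq)
    apply (subst integrable_distr_eq[OF Tm Fm])
    using iP eq by simp
  show "(\<integral>x. (\<Prod>b\<in>Basis. f b (x \<bullet> b)) \<partial>lborel) = (\<Prod>b\<in>Basis. \<integral>x. f b x \<partial>lborel)"
    apply (subst lborel_eq)
    apply (subst integral_distr[OF Tm Fm])
    using eq lborel_prodsf.product_integral_prod[of Basis f] int by simp
qed

lemma Basis_vec_real: "(Basis :: (real^'n) set) = range (\<lambda>i. axis i 1)"
  by (auto simp: Basis_vec_def)

lemma prod_Basis_vec: "(\<Prod>u\<in>(Basis :: (real^'n) set). g u) = (\<Prod>i\<in>UNIV. g (axis i 1))"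
proof -
  have "inj (\<lambda>i::'n. axis i (1::real))" by (auto intro!: injI simp: axis_eq_axis)
  then show ?thesis unfolding Basis_vec_real by (simp add: prod.reindex)
qed

lemma pair_vec_prod:
  fixes a b :: "'n::finite \<Rightarrow> real \<Rightarrow> real"
  assumes ia: "\<And>i. integrable lborel (a i)" and ib: "\<And>i. integrable lborel (b i)"
  shows "integrable lborel (\<lambda>zz::(real^'n)\<times>(real^'n). (\<Prod>i\<in>UNIV. a i (fst zz $ i)) * (\<Prod>i\<in>UNIV. b i (snd zz $ i)))"
    and "(\<integral>zz. (\<Prod>i\<in>UNIV. a i (fst zz $ i)) * (\<Prod>i\<in>UNIV. b i (snd zz $ i)) \<partial>lborel)
         = (\<Prod>i\<in>UNIV. \<integral>x. a i x \<partial>lborel) * (\<Prod>i\<in>UNIV. \<integral>x. b i x \<partial>lborel)"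
proof -
  define f where "f \<beta> = (if snd \<beta> = 0 then a (axis_index (fst \<beta>)) else b (axis_index (snd \<beta>)))"
    for \<beta> :: "(real^'n)\<times>(real^'n)"
  have inj1: "inj (\<lambda>u::real^'n. (u, 0::real^'n))" by (auto intro!: injI)
  have inj2: "inj (\<lambda>u::real^'n. (0::real^'n, u))" by (auto intro!: injI)
  have disj: "(\<lambda>u::real^'n. (u, 0::real^'n)) ` Basis \<inter> (\<lambda>u. (0, u)) ` Basis = {}"
    by auto
  have P: "(\<Prod>\<beta>\<in>Basis. F \<beta>) = (\<Prod>i\<in>UNIV. F (axis i 1, 0)) * (\<Prod>i\<in>UNIV. F (0, axis i 1))"
    for F :: "(real^'n)\<times>(real^'n) \<Rightarrow> real"
  proof -
    have "(\<Prod>\<beta>\<in>Basis. F \<beta>) = (\<Prod>\<beta>\<in>(\<lambda>u::real^'n. (u, 0::real^'n)) ` Basis. F \<beta>) * (\<Prod>\<beta>\<in>(\<lambda>u. (0, u)) ` Basis. F \<beta>)"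
      unfolding Basis_prod_def by (rule prod.union_disjoint) (use disj in auto)
    also have "\<dots> = (\<Prod>u\<in>Basis. F (u, 0)) * (\<Prod>u\<in>Basis. F (0, u))"
      using inj1 inj2 by (simp add: prod.reindex inj_on_subset[OF _ subset_UNIV])
    finally show ?thesis by (simp add: prod_Basis_vec)
  qed
  have fun_eq: "(\<Prod>\<beta>\<in>Basis. f \<beta> (zz \<bullet> \<beta>)) = (\<Prod>i\<in>UNIV. a i (fst zz $ i)) * (\<Prod>i\<in>UNIV. b i (snd zz $ i))" for zz
    unfolding P by (cases zz) (simp add: f_def inner_Pair_0 inner_axis)
  have int_eq: "(\<Prod>\<beta>\<in>Basis. \<integral>x. f \<beta> x \<partial>lborel) = (\<Prod>i\<in>UNIV. \<integral>x. a i x \<partial>lborel) * (\<Prod>i\<in>UNIV. \<integral>x. b i x \<partial>lborel)"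
    unfolding P by (simp add: f_def)
  have intf: "integrable lborel (f \<beta>)" for \<beta> unfolding f_def using ia ib by simp
  show "integrable lborel (\<lambda>zz::(real^'n)\<times>(real^'n). (\<Prod>i\<in>UNIV. a i (fst zz $ i)) * (\<Prod>i\<in>UNIV. b i (snd zz $ i)))"
    using lborel_prod_Basis(1)[of f, OF intf] by (simp add: fun_eq)
  show "(\<integral>zz. (\<Prod>i\<in>UNIV. a i (fst zz $ i)) * (\<Prod>i\<in>UNIV. b i (snd zz $ i)) \<partial>lborel)
         = (\<Prod>i\<in>UNIV. \<integral>x. a i x \<partial>lborel) * (\<Prod>i\<in>UNIV. \<integral>x. b i x \<partial>lborel)"
    using lborel_prod_Basis(2)[of f, OF intf] by (simp add: fun_eq int_eq)
qed

lemma sqrt_prod: "sqrt (prod f A) = (\<Prod>i\<in>A. sqrt (f i))"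
  by (induct A rule: infinite_finite_induct) (simp_all add: real_sqrt_mult)

lemma diag_entry: "posdef_diag S \<Longrightarrow> S$i$k = (if i = k then S$i$i else 0)"
  unfolding posdef_diag_def by auto

lemma diag_inv:
  fixes S :: "real^'n^'n"
  assumes "posdef_diag S"
  shows "matrix_inv S = (\<chi> i j. if i = j then 1 / S$i$i else 0)"
proof (rule matrix_inv_eq)
  have pos: "S$i$i > 0" for i using assms unfolding posdef_diag_def by auto
  define D :: "real^'n^'n" where "D = (\<chi> i j. if i = j then 1 / S$i$i else 0)"
  have "(\<Sum>k\<in>UNIV. S$i$k * D$k$j) = (\<Sum>k\<in>UNIV. if k = i then S$i$i * D$i$j else 0)" for i j
    using assms by (intro sum.cong) (auto simp: posdef_diag_def)
  then show "S ** (\<chi> i j. if i = j then 1 / S$i$i else 0) = mat 1"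
    unfolding D_def[symmetric] matrix_matrix_mult_def mat_def
    using pos assms by (auto simp: vec_eq_iff D_def less_le posdef_diag_def)
  have "(\<Sum>k\<in>UNIV. D$i$k * S$k$j) = (\<Sum>k\<in>UNIV. if k = i then D$i$i * S$i$j else 0)" for i j
    by (rule sum.cong) (auto simp: D_def)
  then show "(\<chi> i j. if i = j then 1 / S$i$i else 0) ** S = mat 1"
    unfolding D_def[symmetric] matrix_matrix_mult_def mat_def
    using pos assms by (auto simp: vec_eq_iff D_def less_le posdef_diag_def)
qed

lemma inner_mat_vec: "(x::real^'n) \<bullet> (A *v y) = (\<Sum>i\<in>UNIV. \<Sum>j\<in>UNIV. x$i * A$i$j * y$j)"
  by (simp add: inner_vec_def matrix_vector_mult_def sum_distrib_left mult.assoc)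

lemma det_diag_scaled:
  fixes S :: "real^'n^'n"
  assumes "posdef_diag S"
  shows "det (c *\<^sub>R S) = (\<Prod>i\<in>UNIV. c * S$i$i)"
  using assms by (subst det_diagonal) (auto simp: posdef_diag_def)

lemma gauss_diag:
  fixes S :: "real^'n^'n"
  assumes d: "posdef_diag S"
  shows "gauss_pdf v m S = (\<Prod>i\<in>UNIV. normal_density (m$i) (sqrt (S$i$i)) (v$i))"
proof -
  have pos: "S$i$i > 0" for i using d unfolding posdef_diag_def by auto
  have q: "(v - m) \<bullet> (matrix_inv S *v (v - m)) = (\<Sum>i\<in>UNIV. (v$i - m$i)^2 / S$i$i)"
  proof -
    have "(v$i - m$i) * (if i = j then 1 / S$i$i else 0) * (v - m)$j = (if j = i then (v$i - m$i)^2 / S$i$i else 0)" for i j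
      by (auto simp: power2_eq_square)
    then show ?thesis unfolding diag_inv[OF d] inner_mat_vec by simp
  qed
  have "gauss_pdf v m S = exp (\<Sum>i\<in>UNIV. - ((v$i - m$i)^2 / (2 * S$i$i))) / (\<Prod>i\<in>UNIV. sqrt (2 * pi * S$i$i))"
    unfolding gauss_pdf_def q det_diag_scaled[OF d] sqrt_prod
    by (simp add: sum_distrib_left sum_negf)
  also have "\<dots> = (\<Prod>i\<in>UNIV. exp (- ((v$i - m$i)^2 / (2 * S$i$i))) / sqrt (2 * pi * S$i$i))"
    by (simp add: exp_sum prod_dividef)
  also have "\<dots> = (\<Prod>i\<in>UNIV. normal_density (m$i) (sqrt (S$i$i)) (v$i))"
    using pos by (intro prod.cong refl) (simp add: normal_density_def less_imp_le)
  finally show ?thesis .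
qed

lemma pairQ:
  fixes n1 n2 h k :: "'n::finite \<Rightarrow> real \<Rightarrow> real"
  assumes "\<And>i. integrable lborel (\<lambda>x. n1 i x * h i x)" "\<And>i. integrable lborel (\<lambda>x. n2 i x * k i x)"
  shows "has_bochner_integral lborel
     (\<lambda>zz::(real^'n)\<times>(real^'n). ((\<Prod>i\<in>UNIV. n1 i (fst zz$i)) * (\<Prod>i\<in>UNIV. n2 i (snd zz$i)))
         * ((\<Prod>i\<in>UNIV. h i (fst zz$i)) * (\<Prod>i\<in>UNIV. k i (snd zz$i))))
     ((\<Prod>i\<in>UNIV. \<integral>x. n1 i x * h i x \<partial>lborel) * (\<Prod>i\<in>UNIV. \<integral>x. n2 i x * k i x \<partial>lborel))"
proof -
  have eq: "((\<Prod>i\<in>UNIV. n1 i (fst zz$i)) * (\<Prod>i\<in>UNIV. n2 i (snd zz$i)))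
         * ((\<Prod>i\<in>UNIV. h i (fst zz$i)) * (\<Prod>i\<in>UNIV. k i (snd zz$i)))
     = (\<Prod>i\<in>UNIV. n1 i (fst zz$i) * h i (fst zz$i)) * (\<Prod>i\<in>UNIV. n2 i (snd zz$i) * k i (snd zz$i))"
    for zz :: "(real^'n)\<times>(real^'n)" by (simp add: prod.distrib mult_ac)
  show ?thesis
    unfolding eq has_bochner_integral_iff
    using pair_vec_prod[of "\<lambda>i x. n1 i x * h i x" "\<lambda>i x. n2 i x * k i x", OF assms] by simp
qed

lemma hbi: "integrable M f \<Longrightarrow> integral\<^sup>L M f = v \<Longrightarrow> has_bochner_integral M f v"
  by (simp add: has_bochner_integral_iff)

context
  fixes \<sigma> :: real
  assumes \<sigma>_pos: "0 < \<sigma>"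
begin
lemma nd_hb0: "has_bochner_integral lborel (\<lambda>x. normal_density \<mu> \<sigma> x * 1) 1"
  using integrable_normal_density[OF \<sigma>_pos] integral_normal_density[OF \<sigma>_pos] by (simp add: hbi)
lemma nd_hb1: "has_bochner_integral lborel (\<lambda>x. normal_density \<mu> \<sigma> x * x) \<mu>"
  using normal_moment_nz_1[OF \<sigma>_pos] by simp
lemma nd_hbc2: "has_bochner_integral lborel (\<lambda>x. normal_density \<mu> \<sigma> x * (x - \<mu>)^2) (\<sigma>^2)"
  using normal_moment_even[OF \<sigma>_pos, of \<mu> 1] by (simp add: power2_eq_square)
lemma nd_hb2: "has_bochner_integral lborel (\<lambda>x. normal_density \<mu> \<sigma> x * (x * x)) (\<mu>^2 + \<sigma>^2)"
proof -
  have "(\<lambda>x. normal_density \<mu> \<sigma> x * (x * x)) = (\<lambda>x. normal_density \<mu> \<sigma> x * (x - \<mu>)^2 + 2 * \<mu> * (normal_density \<mu> \<sigma> x * x) - \<mu>^2 * (normal_density \<mu> \<sigma> x * 1))"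
    by (auto simp: power2_eq_square algebra_simps)
  moreover have "has_bochner_integral lborel (\<lambda>x. normal_density \<mu> \<sigma> x * (x - \<mu>)^2 + 2 * \<mu> * (normal_density \<mu> \<sigma> x * x) - \<mu>^2 * (normal_density \<mu> \<sigma> x * 1)) (\<sigma>^2 + 2 * \<mu> * \<mu> - \<mu>^2 * 1)"
    by (intro has_bochner_integral_diff has_bochner_integral_add has_bochner_integral_mult_right nd_hbc2 nd_hb1 nd_hb0)
  ultimately show ?thesis by (simp add: power2_eq_square)
qed
end

locale dgauss =
  fixes \<mu>1 \<mu>2 :: "real^'n::finite" and \<sigma>1 \<sigma>2 :: "'n \<Rightarrow> real"
  assumes \<sigma>1_pos: "\<And>i. 0 < \<sigma>1 i" and \<sigma>2_pos: "\<And>i. 0 < \<sigma>2 i"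
begin

definition Q :: "(real^'n)\<times>(real^'n) \<Rightarrow> real" where
  "Q zz = (\<Prod>i\<in>UNIV. normal_density (\<mu>1$i) (\<sigma>1 i) (fst zz$i)) * (\<Prod>i\<in>UNIV. normal_density (\<mu>2$i) (\<sigma>2 i) (snd zz$i))"

lemma Q_gen:
  fixes h k :: "'n \<Rightarrow> real \<Rightarrow> real"
  assumes "\<And>i. integrable lborel (\<lambda>x. normal_density (\<mu>1$i) (\<sigma>1 i) x * h i x)"
    "\<And>i. integrable lborel (\<lambda>x. normal_density (\<mu>2$i) (\<sigma>2 i) x * k i x)"
  shows "has_bochner_integral lborel (\<lambda>zz. Q zz * ((\<Prod>i\<in>UNIV. h i (fst zz$i)) * (\<Prod>i\<in>UNIV. k i (snd zz$i))))
     ((\<Prod>i\<in>UNIV. \<integral>x. normal_density (\<mu>1$i) (\<sigma>1 i) x * h i x \<partial>lborel) * (\<Prod>i\<in>UNIV. \<integral>x. normal_density (\<mu>2$i) (\<sigma>2 i) x * k i x \<partial>lborel))"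
  unfolding Q_def by (rule pairQ[OF assms])

lemma int_nd1: "integrable lborel (\<lambda>x. normal_density m (\<sigma>1 i) x)"
  using integrable_normal_density[OF \<sigma>1_pos] .
lemma int_nd2: "integrable lborel (\<lambda>x. normal_density m (\<sigma>2 i) x)"
  using integrable_normal_density[OF \<sigma>2_pos] .
lemma I_nd1: "(\<integral>x. normal_density m (\<sigma>1 i) x \<partial>lborel) = 1"
  using integral_normal_density[OF \<sigma>1_pos] .
lemma I_nd2: "(\<integral>x. normal_density m (\<sigma>2 i) x \<partial>lborel) = 1"
  using integral_normal_density[OF \<sigma>2_pos] .

lemma E_11:
  assumes "has_bochner_integral lborel (\<lambda>x. normal_density (\<mu>1$i) (\<sigma>1 i) x * g1 x) v1"
    and "has_bochner_integral lborel (\<lambda>x. normal_density (\<mu>1$j) (\<sigma>1 j) x * g2 x) v2"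
    and "i \<noteq> j"
  shows "has_bochner_integral lborel (\<lambda>zz. Q zz * (g1 (fst zz $ i) * g2 (fst zz $ j))) (v1 * v2)"
proof -
  define h where "h l x = (if l = i then g1 x else if l = j then g2 x else 1)" for l x
  have hi: "integrable lborel (\<lambda>x. normal_density (\<mu>1$l) (\<sigma>1 l) x * h l x)" for l
    using assms int_nd1 unfolding h_def by (cases "l = i"; cases "l = j") (auto simp: has_bochner_integral_iff)
  have P: "(\<Prod>l\<in>UNIV. F l) = F i * F j" if "\<And>l. l \<noteq> i \<Longrightarrow> l \<noteq> j \<Longrightarrow> F l = 1" for F :: "'n \<Rightarrow> real"
  proof -
    have "(\<Prod>l\<in>UNIV. F l) = (\<Prod>l\<in>{i,j}. F l)"
      using that by (intro prod.mono_neutral_right) auto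
    then show ?thesis using assms(3) by simp
  qed
  have e1: "(\<Prod>l\<in>UNIV. h l (fst zz $ l)) = g1 (fst zz $ i) * g2 (fst zz $ j)" for zz
    by (subst P) (auto simp: h_def assms(3)[symmetric])
  have e2: "(\<Prod>l\<in>UNIV. \<integral>x. normal_density (\<mu>1$l) (\<sigma>1 l) x * h l x \<partial>lborel) = v1 * v2"
    by (subst P) (use assms in \<open>auto simp: h_def I_nd1 has_bochner_integral_iff\<close>)
  show ?thesis
    using Q_gen[of h "\<lambda>_ _. 1", OF hi] int_nd2 by (simp add: e1 e2 I_nd2)
qed

lemma prod_single: "(\<Prod>l\<in>UNIV. F l) = (F i :: real)" if "\<And>l. l \<noteq> i \<Longrightarrow> F l = 1" for F :: "'n \<Rightarrow> real"
proof -
  have "(\<Prod>l\<in>UNIV. F l) = (\<Prod>l\<in>{i}. F l)"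
    using that by (intro prod.mono_neutral_right) auto
  then show ?thesis by simp
qed

lemma E_1:
  assumes "has_bochner_integral lborel (\<lambda>x. normal_density (\<mu>1$i) (\<sigma>1 i) x * g x) v"
  shows "has_bochner_integral lborel (\<lambda>zz. Q zz * g (fst zz $ i)) v"
proof -
  define h where "h l x = (if l = i then g x else 1)" for l x
  have hi: "integrable lborel (\<lambda>x. normal_density (\<mu>1$l) (\<sigma>1 l) x * h l x)" for l
    using assms int_nd1 unfolding h_def by (cases "l = i") (auto simp: has_bochner_integral_iff)
  have e1: "(\<Prod>l\<in>UNIV. h l (fst zz $ l)) = g (fst zz $ i)" for zz
    by (subst prod_single[where i=i]) (auto simp: h_def)
  have e2: "(\<Prod>l\<in>UNIV. \<integral>x. normal_density (\<mu>1$l) (\<sigma>1 l) x * h l x \<partial>lborel) = v"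
    by (subst prod_single[where i=i]) (use assms in \<open>auto simp: h_def I_nd1 has_bochner_integral_iff\<close>)
  show ?thesis
    using Q_gen[of h "\<lambda>_ _. 1", OF hi] int_nd2 by (simp add: e1 e2 I_nd2)
qed

lemma E_2:
  assumes "has_bochner_integral lborel (\<lambda>x. normal_density (\<mu>2$i) (\<sigma>2 i) x * g x) v"
  shows "has_bochner_integral lborel (\<lambda>zz. Q zz * g (snd zz $ i)) v"
proof -
  define h where "h l x = (if l = i then g x else 1)" for l x
  have hi: "integrable lborel (\<lambda>x. normal_density (\<mu>2$l) (\<sigma>2 l) x * h l x)" for l
    using assms int_nd2 unfolding h_def by (cases "l = i") (auto simp: has_bochner_integral_iff)
  have e1: "(\<Prod>l\<in>UNIV. h l (snd zz $ l)) = g (snd zz $ i)" for zz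
    by (subst prod_single[where i=i]) (auto simp: h_def)
  have e2: "(\<Prod>l\<in>UNIV. \<integral>x. normal_density (\<mu>2$l) (\<sigma>2 l) x * h l x \<partial>lborel) = v"
    by (subst prod_single[where i=i]) (use assms in \<open>auto simp: h_def I_nd2 has_bochner_integral_iff\<close>)
  show ?thesis
    using Q_gen[of "\<lambda>_ _. 1" h, OF _ hi] int_nd1 by (simp add: e1 e2 I_nd1)
qed

lemma E_22:
  assumes "has_bochner_integral lborel (\<lambda>x. normal_density (\<mu>2$i) (\<sigma>2 i) x * g1 x) v1"
    and "has_bochner_integral lborel (\<lambda>x. normal_density (\<mu>2$j) (\<sigma>2 j) x * g2 x) v2"
    and "i \<noteq> j"
  shows "has_bochner_integral lborel (\<lambda>zz. Q zz * (g1 (snd zz $ i) * g2 (snd zz $ j))) (v1 * v2)"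
proof -
  define h where "h l x = (if l = i then g1 x else if l = j then g2 x else 1)" for l x
  have hi: "integrable lborel (\<lambda>x. normal_density (\<mu>2$l) (\<sigma>2 l) x * h l x)" for l
    using assms int_nd2 unfolding h_def by (cases "l = i"; cases "l = j") (auto simp: has_bochner_integral_iff)
  have P: "(\<Prod>l\<in>UNIV. F l) = F i * F j" if "\<And>l. l \<noteq> i \<Longrightarrow> l \<noteq> j \<Longrightarrow> F l = 1" for F :: "'n \<Rightarrow> real"
  proof -
    have "(\<Prod>l\<in>UNIV. F l) = (\<Prod>l\<in>{i,j}. F l)"
      using that by (intro prod.mono_neutral_right) auto
    then show ?thesis using assms(3) by simp
  qed
  have e1: "(\<Prod>l\<in>UNIV. h l (snd zz $ l)) = g1 (snd zz $ i) * g2 (snd zz $ j)" for zz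
    by (subst P) (auto simp: h_def assms(3)[symmetric])
  have e2: "(\<Prod>l\<in>UNIV. \<integral>x. normal_density (\<mu>2$l) (\<sigma>2 l) x * h l x \<partial>lborel) = v1 * v2"
    by (subst P) (use assms in \<open>auto simp: h_def I_nd2 has_bochner_integral_iff\<close>)
  show ?thesis
    using Q_gen[of "\<lambda>_ _. 1" h, OF _ hi] int_nd1 by (simp add: e1 e2 I_nd1)
qed

lemma E_12:
  assumes "has_bochner_integral lborel (\<lambda>x. normal_density (\<mu>1$i) (\<sigma>1 i) x * g1 x) v1"
    and "has_bochner_integral lborel (\<lambda>x. normal_density (\<mu>2$j) (\<sigma>2 j) x * g2 x) v2"
  shows "has_bochner_integral lborel (\<lambda>zz. Q zz * (g1 (fst zz $ i) * g2 (snd zz $ j))) (v1 * v2)"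
proof -
  define h where "h l x = (if l = i then g1 x else 1)" for l x
  define k where "k l x = (if l = j then g2 x else 1)" for l x
  have hi: "integrable lborel (\<lambda>x. normal_density (\<mu>1$l) (\<sigma>1 l) x * h l x)" for l
    using assms int_nd1 unfolding h_def by (cases "l = i") (auto simp: has_bochner_integral_iff)
  have ki: "integrable lborel (\<lambda>x. normal_density (\<mu>2$l) (\<sigma>2 l) x * k l x)" for l
    using assms int_nd2 unfolding k_def by (cases "l = j") (auto simp: has_bochner_integral_iff)
  have e1: "(\<Prod>l\<in>UNIV. h l (fst zz $ l)) = g1 (fst zz $ i)" for zz
    by (subst prod_single[where i=i]) (auto simp: h_def)
  have e1': "(\<Prod>l\<in>UNIV. k l (snd zz $ l)) = g2 (snd zz $ j)" for zz
    by (subst prod_single[where i=j]) (auto simp: k_def)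
  have e2: "(\<Prod>l\<in>UNIV. \<integral>x. normal_density (\<mu>1$l) (\<sigma>1 l) x * h l x \<partial>lborel) = v1"
    by (subst prod_single[where i=i]) (use assms in \<open>auto simp: h_def I_nd1 has_bochner_integral_iff\<close>)
  have e2': "(\<Prod>l\<in>UNIV. \<integral>x. normal_density (\<mu>2$l) (\<sigma>2 l) x * k l x \<partial>lborel) = v2"
    by (subst prod_single[where i=j]) (use assms in \<open>auto simp: k_def I_nd2 has_bochner_integral_iff\<close>)
  show ?thesis
    using Q_gen[of h k, OF hi ki] by (simp add: e1 e1' e2 e2')
qed

lemma E_0: "has_bochner_integral lborel (\<lambda>zz. Q zz * 1) 1"
  using Q_gen[of "\<lambda>_ _. 1" "\<lambda>_ _. 1"] int_nd1 int_nd2 by (simp add: I_nd1 I_nd2)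

lemma M_z: "has_bochner_integral lborel (\<lambda>zz. Q zz * fst zz $ i) (\<mu>1 $ i)"
  using E_1[of i "\<lambda>x. x", OF nd_hb1[OF \<sigma>1_pos]] by simp
lemma M_z': "has_bochner_integral lborel (\<lambda>zz. Q zz * snd zz $ i) (\<mu>2 $ i)"
  using E_2[of i "\<lambda>x. x", OF nd_hb1[OF \<sigma>2_pos]] by simp
lemma M_zc: "has_bochner_integral lborel (\<lambda>zz. Q zz * (fst zz $ i - \<mu>1 $ i)^2) ((\<sigma>1 i)^2)"
  using E_1[of i "\<lambda>x. (x - \<mu>1 $ i)^2", OF nd_hbc2[OF \<sigma>1_pos]] by simp
lemma M_zc': "has_bochner_integral lborel (\<lambda>zz. Q zz * (snd zz $ i - \<mu>2 $ i)^2) ((\<sigma>2 i)^2)"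
  using E_2[of i "\<lambda>x. (x - \<mu>2 $ i)^2", OF nd_hbc2[OF \<sigma>2_pos]] by simp
lemma M_zz: "has_bochner_integral lborel (\<lambda>zz. Q zz * (fst zz $ i * fst zz $ j))
   (\<mu>1 $ i * \<mu>1 $ j + (if i = j then (\<sigma>1 i)^2 else 0))"
proof (cases "i = j")
  case True
  then show ?thesis using E_1[of i "\<lambda>x. x * x", OF nd_hb2[OF \<sigma>1_pos]] by (simp add: power2_eq_square)
next
  case False
  then show ?thesis using E_11[of i "\<lambda>x. x" _ j "\<lambda>x. x", OF nd_hb1[OF \<sigma>1_pos] nd_hb1[OF \<sigma>1_pos]] by simp
qed
lemma M_z'z': "has_bochner_integral lborel (\<lambda>zz. Q zz * (snd zz $ i * snd zz $ j))
   (\<mu>2 $ i * \<mu>2 $ j + (if i = j then (\<sigma>2 i)^2 else 0))"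
proof (cases "i = j")
  case True
  then show ?thesis using E_2[of i "\<lambda>x. x * x", OF nd_hb2[OF \<sigma>2_pos]] by (simp add: power2_eq_square)
next
  case False
  then show ?thesis using E_22[of i "\<lambda>x. x" _ j "\<lambda>x. x", OF nd_hb1[OF \<sigma>2_pos] nd_hb1[OF \<sigma>2_pos]] by simp
qed
lemma M_zz': "has_bochner_integral lborel (\<lambda>zz. Q zz * (fst zz $ i * snd zz $ j)) (\<mu>1 $ i * \<mu>2 $ j)"
  using E_12[of i "\<lambda>x. x" _ j "\<lambda>x. x", OF nd_hb1[OF \<sigma>1_pos] nd_hb1[OF \<sigma>2_pos]] by simp

lemma Q_pos: "Q zz > 0"
  unfolding Q_def using \<sigma>1_pos \<sigma>2_pos by (intro mult_pos_pos prod_pos normal_density_pos) auto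

lemma ln_nd: "0 < s \<Longrightarrow> ln (normal_density m s x) = - ln (sqrt (2 * pi * s^2)) - (x - m)^2 / (2 * s^2)"
  unfolding normal_density_def by (simp add: ln_mult ln_div)

lemma ln_Q: "ln (Q zz) = (\<Sum>i\<in>UNIV. - ln (sqrt (2 * pi * (\<sigma>1 i)^2)) - (fst zz $ i - \<mu>1 $ i)^2 / (2 * (\<sigma>1 i)^2))
   + (\<Sum>i\<in>UNIV. - ln (sqrt (2 * pi * (\<sigma>2 i)^2)) - (snd zz $ i - \<mu>2 $ i)^2 / (2 * (\<sigma>2 i)^2))"
proof -
  have p1: "(\<Prod>i\<in>UNIV. normal_density (\<mu>1$i) (\<sigma>1 i) (fst zz$i)) > 0"
    using \<sigma>1_pos by (intro prod_pos normal_density_pos) auto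
  have p2: "(\<Prod>i\<in>UNIV. normal_density (\<mu>2$i) (\<sigma>2 i) (snd zz$i)) > 0"
    using \<sigma>2_pos by (intro prod_pos normal_density_pos) auto
  show ?thesis
    unfolding Q_def using p1 p2 \<sigma>1_pos \<sigma>2_pos
    by (simp add: ln_mult ln_prod normal_density_pos ln_nd less_imp_neq[symmetric])
qed

lemma E_lnQ: "has_bochner_integral lborel (\<lambda>zz. Q zz * ln (Q zz))
  ((\<Sum>i\<in>UNIV. - ln (sqrt (2 * pi * (\<sigma>1 i)^2)) - 1/2) + (\<Sum>i\<in>UNIV. - ln (sqrt (2 * pi * (\<sigma>2 i)^2)) - 1/2))"
proof -
  have eq: "(\<lambda>zz. Q zz * ln (Q zz)) = (\<lambda>zz.
     (\<Sum>i\<in>UNIV. - ln (sqrt (2 * pi * (\<sigma>1 i)^2)) * (Q zz * 1) - 1 / (2 * (\<sigma>1 i)^2) * (Q zz * (fst zz $ i - \<mu>1 $ i)^2))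
   + (\<Sum>i\<in>UNIV. - ln (sqrt (2 * pi * (\<sigma>2 i)^2)) * (Q zz * 1) - 1 / (2 * (\<sigma>2 i)^2) * (Q zz * (snd zz $ i - \<mu>2 $ i)^2)))"
    by (rule ext) (simp add: ln_Q distrib_left sum_distrib_left sum_subtractf algebra_simps)
  have v1: "- ln (sqrt (2 * pi * (\<sigma>1 i)^2)) - 1/2 = - ln (sqrt (2 * pi * (\<sigma>1 i)^2)) * 1 - 1 / (2 * (\<sigma>1 i)^2) * (\<sigma>1 i)^2" for i
    using \<sigma>1_pos[of i] by simp
  have v2: "- ln (sqrt (2 * pi * (\<sigma>2 i)^2)) - 1/2 = - ln (sqrt (2 * pi * (\<sigma>2 i)^2)) * 1 - 1 / (2 * (\<sigma>2 i)^2) * (\<sigma>2 i)^2" for i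
    using \<sigma>2_pos[of i] by simp
  show ?thesis unfolding eq v1 v2
    by (intro has_bochner_integral_add has_bochner_integral_sum has_bochner_integral_diff
          has_bochner_integral_mult_right E_0 M_zc M_zc')
qed

lemma E_w: "has_bochner_integral lborel (\<lambda>zz. Q zz * ((fst zz $ i - snd zz $ i) * (fst zz $ j - snd zz $ j)))
   ((\<mu>1 $ i - \<mu>2 $ i) * (\<mu>1 $ j - \<mu>2 $ j) + (if i = j then (\<sigma>1 i)^2 + (\<sigma>2 i)^2 else 0))"
proof -
  have eq: "(\<lambda>zz. Q zz * ((fst zz $ i - snd zz $ i) * (fst zz $ j - snd zz $ j))) = (\<lambda>zz.
     Q zz * (fst zz $ i * fst zz $ j) - Q zz * (fst zz $ i * snd zz $ j) - Q zz * (fst zz $ j * snd zz $ i) + Q zz * (snd zz $ i * snd zz $ j))"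
    by (rule ext) (simp add: algebra_simps)
  have "has_bochner_integral lborel (\<lambda>zz.
     Q zz * (fst zz $ i * fst zz $ j) - Q zz * (fst zz $ i * snd zz $ j) - Q zz * (fst zz $ j * snd zz $ i) + Q zz * (snd zz $ i * snd zz $ j))
    ((\<mu>1 $ i * \<mu>1 $ j + (if i = j then (\<sigma>1 i)^2 else 0)) - \<mu>1 $ i * \<mu>2 $ j - \<mu>1 $ j * \<mu>2 $ i + (\<mu>2 $ i * \<mu>2 $ j + (if i = j then (\<sigma>2 i)^2 else 0)))"
    by (intro has_bochner_integral_add has_bochner_integral_diff M_zz M_zz' M_z'z')
  then show ?thesis unfolding eq by (auto simp: algebra_simps)
qed

lemma E_quad: "has_bochner_integral lborel (\<lambda>zz. Q zz * ((fst zz - snd zz) \<bullet> (A *v (fst zz - snd zz))))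
   ((\<mu>1 - \<mu>2) \<bullet> (A *v (\<mu>1 - \<mu>2)) + (\<Sum>i\<in>UNIV. A$i$i * ((\<sigma>1 i)^2 + (\<sigma>2 i)^2)))"
proof -
  have eq: "(\<lambda>zz. Q zz * ((fst zz - snd zz) \<bullet> (A *v (fst zz - snd zz)))) = (\<lambda>zz.
     \<Sum>i\<in>UNIV. \<Sum>j\<in>UNIV. A$i$j * (Q zz * ((fst zz $ i - snd zz $ i) * (fst zz $ j - snd zz $ j))))"
    unfolding inner_mat_vec sum_distrib_left by (intro ext sum.cong refl) (simp add: mult_ac)
  have "has_bochner_integral lborel (\<lambda>zz.
     \<Sum>i\<in>UNIV. \<Sum>j\<in>UNIV. A$i$j * (Q zz * ((fst zz $ i - snd zz $ i) * (fst zz $ j - snd zz $ j))))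
     (\<Sum>i\<in>UNIV. \<Sum>j\<in>UNIV. A$i$j * ((\<mu>1 $ i - \<mu>2 $ i) * (\<mu>1 $ j - \<mu>2 $ j) + (if i = j then (\<sigma>1 i)^2 + (\<sigma>2 i)^2 else 0)))"
    by (intro has_bochner_integral_sum has_bochner_integral_mult_right E_w)
  moreover have "(\<Sum>i\<in>UNIV. \<Sum>j\<in>UNIV. A$i$j * ((\<mu>1 $ i - \<mu>2 $ i) * (\<mu>1 $ j - \<mu>2 $ j) + (if i = j then (\<sigma>1 i)^2 + (\<sigma>2 i)^2 else 0)))
     = (\<mu>1 - \<mu>2) \<bullet> (A *v (\<mu>1 - \<mu>2)) + (\<Sum>i\<in>UNIV. A$i$i * ((\<sigma>1 i)^2 + (\<sigma>2 i)^2))"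
  proof -
    have "A$i$j * ((\<mu>1 $ i - \<mu>2 $ i) * (\<mu>1 $ j - \<mu>2 $ j) + (if i = j then (\<sigma>1 i)^2 + (\<sigma>2 i)^2 else 0))
      = (\<mu>1 - \<mu>2)$i * A$i$j * (\<mu>1 - \<mu>2)$j + (if j = i then A$i$i * ((\<sigma>1 i)^2 + (\<sigma>2 i)^2) else 0)" for i j
      by (auto simp: algebra_simps)
    then show ?thesis unfolding inner_mat_vec by (simp add: sum.distrib)
  qed
  ultimately show ?thesis unfolding eq by simp
qed

end

lemma det_scaleR_mat:
  fixes A :: "real^'n^'n"
  shows "det (c *\<^sub>R A) = c ^ CARD('n) * det A"
proof -
  have "c *\<^sub>R A = (\<chi> i. c *s (A$i))" by (simp add: vec_eq_iff scalar_mult_eq_scaleR)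
  then show ?thesis using det_rows_mul[of "\<lambda>_. c" "\<lambda>i. A$i"] by (simp add: vec_lambda_eta)
qed

lemma matrix_inv_props:
  fixes A :: "real^'n^'n"
  assumes "invertible A"
  shows "A ** matrix_inv A = mat 1" "matrix_inv A ** A = mat 1"
proof -
  have ex: "\<exists>A'. A ** A' = mat 1 \<and> A' ** A = mat 1" using assms unfolding invertible_def by blast
  have "A ** matrix_inv A = mat 1 \<and> matrix_inv A ** A = mat 1"
    unfolding matrix_inv_def by (rule someI_ex[OF ex])
  then show "A ** matrix_inv A = mat 1" "matrix_inv A ** A = mat 1" by auto
qed

lemma matrix_inv_scaleR2:
  fixes A :: "real^'n^'n"
  assumes "invertible A"
  shows "matrix_inv (2 *\<^sub>R A) = (1/2) *\<^sub>R matrix_inv A"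
  apply (rule matrix_inv_eq)
  using matrix_inv_props[OF assms]
  by (simp_all add: matrix_scalar_ac scalar_matrix_assoc)

lemma posdef_inv_nonneg:
  fixes S :: "real^'n^'n"
  assumes pd: "\<forall>x. x \<noteq> 0 \<longrightarrow> x \<bullet> (S *v x) > 0"
  shows "v \<bullet> (matrix_inv S *v v) \<ge> 0"
proof -
  have inv: "invertible S" by (rule posdef_invertible[OF pd])
  define y where "y = matrix_inv S *v v"
  have "S *v y = v" unfolding y_def
    by (simp add: matrix_vector_mul_assoc matrix_inv_props(1)[OF inv])
  then have "v \<bullet> (matrix_inv S *v v) = y \<bullet> (S *v y)" unfolding y_def[symmetric]
    by (metis inner_commute)
  also have "\<dots> \<ge> 0" using pd by (cases "y = 0") (auto intro: less_imp_le)
  finally show ?thesis .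
qed

lemma gauss_props:
  fixes S :: "real^'n^'n"
  assumes pd: "\<forall>x. x \<noteq> 0 \<longrightarrow> x \<bullet> (S *v x) > 0"
  shows "gauss_pdf v m S > 0" "gauss_pdf v m S \<le> 1 / sqrt (det ((2 * pi) *\<^sub>R S))"
    "det ((2 * pi) *\<^sub>R S) > 0"
    "ln (gauss_pdf v m S) = - (1/2) * ((v - m) \<bullet> (matrix_inv S *v (v - m))) - ln (sqrt (det ((2 * pi) *\<^sub>R S)))"
proof -
  have d: "det S > 0" by (rule posdef_det_pos[OF pd])
  show dp: "det ((2 * pi) *\<^sub>R S) > 0" using d by (simp add: det_scaleR_mat)
  show "gauss_pdf v m S > 0" unfolding gauss_pdf_def using dp by simp
  have "(v - m) \<bullet> (matrix_inv S *v (v - m)) \<ge> 0" by (rule posdef_inv_nonneg[OF pd])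
  then have "exp (- (1/2) * ((v - m) \<bullet> (matrix_inv S *v (v - m)))) \<le> 1" by simp
  then show "gauss_pdf v m S \<le> 1 / sqrt (det ((2 * pi) *\<^sub>R S))" unfolding gauss_pdf_def
    using dp by (simp add: divide_right_mono)
  show "ln (gauss_pdf v m S) = - (1/2) * ((v - m) \<bullet> (matrix_inv S *v (v - m))) - ln (sqrt (det ((2 * pi) *\<^sub>R S)))"
    unfolding gauss_pdf_def using dp by (simp add: ln_div)
qed

lemma sym_posdef_add_half:
  assumes "sym_posdef (A :: real^'n^'n)" "sym_posdef B"
  shows "\<forall>x. x \<noteq> 0 \<longrightarrow> x \<bullet> ((A + (1/2) *\<^sub>R B) *v x) > 0"
  using assms unfolding sym_posdef_def
  by (auto simp: matrix_vector_mult_add_rdistrib inner_add_right scaleR_matrix_vector_assoc[symmetric]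
      intro!: add_pos_pos)

lemma mix_facts:
  fixes Saug :: "real^'n^'n"
  assumes sa: "sym_posdef Saug"
    and pic: "\<And>c. c < C \<Longrightarrow> 0 \<le> pic c \<and> pic c \<le> 1"
    and s1: "(\<Sum>c<C. pic c) = 1"
    and sc: "\<And>c. c < C \<Longrightarrow> sym_posdef (Sc c)"
  shows "\<And>zz. mix_term Saug C pic mu Sc zz > 0"
    and "\<exists>K0 B. \<forall>zz. \<bar>ln (mix_term Saug C pic mu Sc zz)\<bar> \<le> K0 + B * (norm zz)^2"
proof -
  let ?S = "\<lambda>c. Sc c + (1/2) *\<^sub>R Saug"
  let ?g = "\<lambda>c zz. gauss_pdf ((1/2) *\<^sub>R (fst zz + snd zz)) (mu c) (?S c)"
  have pd: "\<forall>x. x \<noteq> 0 \<longrightarrow> x \<bullet> (?S c *v x) > 0" if "c < C" for c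
    using sym_posdef_add_half[OF sc[OF that] sa] .
  obtain c0 where c0: "c0 < C" "pic c0 > 0"
  proof (rule ccontr)
    assume "\<not> thesis"
    then have "\<forall>c<C. pic c = 0"
    proof (intro allI impI)
      fix c assume "c < C"
      with pic have "0 \<le> pic c" by blast
      moreover have "\<not> pic c > 0" using that \<open>c < C\<close> \<open>\<not> thesis\<close> by blast
      ultimately show "pic c = 0" by linarith
    qed
    then have "(\<Sum>c<C. pic c) = 0" by simp
    with s1 show False by simp
  qed
  have terms_nn: "0 \<le> pic c * ?g c zz" if "c \<in> {..<C}" for c zz
  proof -
    have cC: "c < C" using that by simp
    show ?thesis using pic[OF cC] gauss_props(1)[OF pd[OF cC], of "(1/2) *\<^sub>R (fst zz + snd zz)" "mu c"]
      by (meson less_imp_le mult_nonneg_nonneg)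
  qed
  have lower: "pic c0 * ?g c0 zz \<le> mix_term Saug C pic mu Sc zz" for zz
    unfolding mix_term_def using c0 terms_nn by (intro member_le_sum) auto
  show pos: "mix_term Saug C pic mu Sc zz > 0" for zz
    using lower[of zz] c0 gauss_props(1)[OF pd[OF c0(1)], of "(1/2) *\<^sub>R (fst zz + snd zz)" "mu c0"]
    by (smt (verit) mult_pos_pos)
  define Ku where "Ku = (\<Sum>c<C. pic c * (1 / sqrt (det ((2 * pi) *\<^sub>R ?S c))))"
  have upper: "mix_term Saug C pic mu Sc zz \<le> Ku" for zz
    unfolding mix_term_def Ku_def
    using pic gauss_props(2)[OF pd] by (intro sum_mono mult_left_mono) auto
  define M where "M = matrix_inv (?S c0)"
  obtain Kb where Kb: "Kb > 0" "\<And>x. norm (M *v x) \<le> norm x * Kb"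
    using bounded_linear.pos_bounded[OF matrix_vector_mul_bounded_linear[of M]] by blast
  define D0 where "D0 = ln (sqrt (det ((2 * pi) *\<^sub>R ?S c0)))"
  define K0 where "K0 = \<bar>ln Ku\<bar> + \<bar>ln (pic c0)\<bar> + \<bar>D0\<bar> + Kb * (norm (mu c0))^2"
  have "\<bar>ln (mix_term Saug C pic mu Sc zz)\<bar> \<le> K0 + Kb * (norm zz)^2" for zz
  proof -
    define w where "w = (1/2) *\<^sub>R (fst zz + snd zz) - mu c0"
    have nw: "norm w \<le> norm zz + norm (mu c0)"
    proof -
      have "norm ((1/2) *\<^sub>R (fst zz + snd zz)) \<le> (1/2) * (norm (fst zz) + norm (snd zz))"
        using norm_triangle_ineq[of "fst zz" "snd zz"] by simp
      also have "\<dots> \<le> norm zz"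
      proof -
        have "norm (fst zz) \<le> norm zz" "norm (snd zz) \<le> norm zz"
          by (cases zz; simp add: norm_Pair real_sqrt_ge_abs1 real_sqrt_ge_abs2 norm_ge_zero)+
        then show ?thesis by simp
      qed
      finally show ?thesis unfolding w_def using norm_triangle_ineq4[of "(1/2) *\<^sub>R (fst zz + snd zz)" "mu c0"] by simp
    qed
    have nw2: "(norm w)^2 \<le> 2 * (norm zz)^2 + 2 * (norm (mu c0))^2"
    proof -
      have "(norm w)^2 \<le> (norm zz + norm (mu c0))^2" using nw by (simp add: power_mono)
      also have "\<dots> \<le> 2 * (norm zz)^2 + 2 * (norm (mu c0))^2"
        by (smt (verit) power2_sum sum_squares_bound)
      finally show ?thesis .
    qed
    have qf: "w \<bullet> (M *v w) \<le> Kb * (norm w)^2"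
    proof -
      have "w \<bullet> (M *v w) \<le> norm w * norm (M *v w)" by (rule norm_cauchy_schwarz)
      also have "\<dots> \<le> norm w * (norm w * Kb)" using Kb(2)[of w] by (simp add: mult_left_mono)
      finally show ?thesis by (simp add: power2_eq_square mult_ac)
    qed
    have lg: "ln (?g c0 zz) = - (1/2) * (w \<bullet> (M *v w)) - D0"
      unfolding w_def M_def D0_def by (rule gauss_props(4)[OF pd[OF c0(1)]])
    have mpos: "mix_term Saug C pic mu Sc zz > 0" by (rule pos)
    have gpos: "?g c0 zz > 0" using gauss_props(1)[OF pd[OF c0(1)]] .
    have lo: "ln (pic c0) + ln (?g c0 zz) \<le> ln (mix_term Saug C pic mu Sc zz)"
    proof -
      have "ln (pic c0) + ln (?g c0 zz) = ln (pic c0 * ?g c0 zz)" using c0 gpos by (simp add: ln_mult)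
      also have "\<dots> \<le> ln (mix_term Saug C pic mu Sc zz)"
        using lower[of zz] c0 gpos mpos by (subst ln_le_cancel_iff) auto
      finally show ?thesis .
    qed
    have hi: "ln (mix_term Saug C pic mu Sc zz) \<le> ln Ku"
      using upper[of zz] mpos by simp
    have a: "- (K0 + Kb * (norm zz)^2) \<le> ln (mix_term Saug C pic mu Sc zz)"
    proof -
      have "Kb * (norm w)^2 \<le> Kb * (2 * (norm zz)^2 + 2 * (norm (mu c0))^2)"
        using nw2 Kb(1) by (simp add: mult_left_mono)
      then show ?thesis using lo lg qf unfolding K0_def by (simp add: algebra_simps)
    qed
    have b: "ln (mix_term Saug C pic mu Sc zz) \<le> K0 + Kb * (norm zz)^2"
      using hi Kb(1) unfolding K0_def by (smt (verit) zero_le_power2 mult_nonneg_nonneg)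
    show ?thesis using a b by linarith
  qed
  then show "\<exists>K0 B. \<forall>zz. \<bar>ln (mix_term Saug C pic mu Sc zz)\<bar> \<le> K0 + B * (norm zz)^2" by blast
qed

lemma mv_meas[measurable]: "(\<lambda>x. (A::real^'n^'m) *v x) \<in> borel_measurable borel"
  by (intro borel_measurable_continuous_onI linear_continuous_on matrix_vector_mul_bounded_linear)

lemma continuous_on_mv[continuous_intros]:
  "continuous_on S f \<Longrightarrow> continuous_on S (\<lambda>x. (A::real^'n^'m) *v f x)"
  by (rule bounded_linear.continuous_on[OF matrix_vector_mul_bounded_linear])

lemma mix_meas: "(\<lambda>zz. ln (mix_term Saug C pic mu Sc zz)) \<in> borel_measurable lborel"
proof -
  have eq: "mix_term Saug C pic mu Sc = (\<lambda>zz. \<Sum>c<C. pic c * (exp (- (1/2) * (((1/2) *\<^sub>R (fst zz + snd zz) - mu c) \<bullet>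
      (matrix_inv (Sc c + (1/2) *\<^sub>R Saug) *v ((1/2) *\<^sub>R (fst zz + snd zz) - mu c))))
      * (1 / sqrt (det ((2 * pi) *\<^sub>R (Sc c + (1/2) *\<^sub>R Saug))))))"
    unfolding mix_term_def gauss_pdf_def by (intro ext) simp
  have "continuous_on UNIV (mix_term Saug C pic mu Sc)"
    unfolding eq by (intro continuous_intros)
  then have "mix_term Saug C pic mu Sc \<in> borel_measurable borel"
    by (rule borel_measurable_continuous_onI)
  then show ?thesis by simp
qed

lemma diag_entropy_sum:
  fixes S :: "real^'n^'n"
  assumes d: "posdef_diag S"
  shows "(\<Sum>i\<in>UNIV. - ln (sqrt (2 * pi * (sqrt (S$i$i))^2)) - 1/2)
       = - (1/2) * (real CARD('n) * ln (2 * pi) + ln (det S)) - real CARD('n) / 2"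
proof -
  have pos: "S$i$i > 0" for i using d unfolding posdef_diag_def by auto
  have detS: "det S = (\<Prod>i\<in>UNIV. S$i$i)" using d by (subst det_diagonal) (auto simp: posdef_diag_def)
  have t: "- ln (sqrt (2 * pi * (sqrt (S$i$i))^2)) - 1/2 = - (1/2) * ln (2 * pi) - (1/2) * ln (S$i$i) - 1/2" for i
    using pos[of i] by (simp add: ln_sqrt ln_mult less_imp_le field_simps)
  have lnd: "ln (det S) = (\<Sum>i\<in>UNIV. ln (S$i$i))" unfolding detS using pos
    by (subst ln_prod) (auto simp: less_imp_neq[symmetric])
  show ?thesis unfolding t lnd
    by (simp add: sum_subtractf sum.distrib sum_divide_distrib[symmetric] algebra_simps)
qed

lemma trace_diag:
  fixes A S T :: "real^'n^'n"
  assumes "posdef_diag S" "posdef_diag T"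
  shows "trace (A ** (S + T)) = (\<Sum>i\<in>UNIV. A$i$i * ((sqrt (S$i$i))^2 + (sqrt (T$i$i))^2))"
proof -
  have pos: "S$i$i > 0" "T$i$i > 0" for i using assms unfolding posdef_diag_def by auto
  have "(\<Sum>k\<in>UNIV. A$i$k * (S + T)$k$i) = (\<Sum>k\<in>UNIV. if k = i then A$i$i * (S$i$i + T$i$i) else 0)" for i
    using assms by (intro sum.cong) (auto simp: posdef_diag_def)
  then show ?thesis unfolding trace_def matrix_matrix_mult_def using pos by (simp add: less_imp_le)
qed

lemma norm_sq_pair: "(norm (zz :: (real^'n)\<times>(real^'n)))^2 = (\<Sum>i\<in>UNIV. fst zz $ i * fst zz $ i) + (\<Sum>i\<in>UNIV. snd zz $ i * snd zz $ i)"
proof -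
  have "(norm zz)^2 = (norm (fst zz))^2 + (norm (snd zz))^2" by (cases zz) (simp add: norm_Pair)
  then show ?thesis by (simp add: power2_norm_eq_inner inner_vec_def)
qed

theorem theorem2:
  fixes Saug :: "real^'n^'n"
    and C :: nat and pic :: "nat \<Rightarrow> real" and mu :: "nat \<Rightarrow> real^'n" and Sc :: "nat \<Rightarrow> real^'n^'n"
    and mx mx' :: "real^'n" and Sx Sx' :: "real^'n^'n"
    and ptheta :: "'x \<Rightarrow> ((real^'n) \<times> (real^'n)) \<Rightarrow> real" and xbar :: 'x
  assumes "sym_posdef Saug"
    and "C \<ge> 1"
    and "\<And>c. c < C \<Longrightarrow> 0 \<le> pic c \<and> pic c \<le> 1"
    and "(\<Sum>c<C. pic c) = 1"
    and "\<And>c. c < C \<Longrightarrow> sym_posdef (Sc c)"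
    and "posdef_diag Sx" and "posdef_diag Sx'"
  shows "elbo ptheta xbar (q_post mx Sx mx' Sx') (prior_psi Saug C pic mu Sc) =
      expect (q_post mx Sx mx' Sx') (\<lambda>zz. ln (ptheta xbar zz))
    + expect (q_post mx Sx mx' Sx') (\<lambda>zz. ln (mix_term Saug C pic mu Sc zz))
    - (1/4) * (trace (matrix_inv Saug ** (Sx + Sx'))
               + (mx - mx') \<bullet> (matrix_inv Saug *v (mx - mx')))
    + (1/2) * (ln (det Sx) + ln (det Sx'))
    + real CARD('n) + (real CARD('n) / 2) * ln pi
    - (1/2) * ln (det Saug)"
proof -
  let ?d = "real CARD('n)"
  have sx: "Sx$i$i > 0" "Sx'$i$i > 0" for i using assms(6,7) unfolding posdef_diag_def by auto
  interpret G: dgauss mx mx' "\<lambda>i. sqrt (Sx$i$i)" "\<lambda>i. sqrt (Sx'$i$i)"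
    by standard (simp_all add: sx)
  define Q where "Q = q_post mx Sx mx' Sx'"
  have QQ: "Q = G.Q" unfolding Q_def q_post_def G.Q_def
    by (intro ext) (simp add: gauss_diag[OF assms(6)] gauss_diag[OF assms(7)])
  have pdA: "\<forall>x. x \<noteq> 0 \<longrightarrow> x \<bullet> (Saug *v x) > 0" using assms(1) unfolding sym_posdef_def by auto
  have detA: "det Saug > 0" by (rule posdef_det_pos[OF pdA])
  have invA: "invertible Saug" by (rule posdef_invertible[OF pdA])
  define Ai where "Ai = matrix_inv Saug"
  have pd2: "\<forall>x. x \<noteq> 0 \<longrightarrow> x \<bullet> ((2 *\<^sub>R Saug) *v x) > 0"
    using pdA by (simp add: scaleR_matrix_vector_assoc[symmetric])
  define g where "g zz = gauss_pdf 0 (fst zz - snd zz) (2 *\<^sub>R Saug)" for zz :: "(real^'n)\<times>(real^'n)"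
  define mixf where "mixf = mix_term Saug C pic mu Sc"
  have prior_eq: "prior_psi Saug C pic mu Sc zz = g zz * mixf zz" for zz
    unfolding prior_psi_def g_def mixf_def by simp
  define LA where "LA = (1/2) * (?d * ln (4 * pi) + ln (det Saug))"
  have lng: "ln (g zz) = - (1/4) * ((fst zz - snd zz) \<bullet> (Ai *v (fst zz - snd zz))) - LA" for zz
  proof -
    have qf: "(0 - (fst zz - snd zz)) \<bullet> (matrix_inv (2 *\<^sub>R Saug) *v (0 - (fst zz - snd zz)))
        = (1/2) * ((fst zz - snd zz) \<bullet> (Ai *v (fst zz - snd zz)))"
      unfolding matrix_inv_scaleR2[OF invA] Ai_def
      by (simp add: scaleR_matrix_vector_assoc[symmetric] matrix_vector_mult_diff_distrib inner_diff_left inner_diff_right algebra_simps)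
    have dt: "det ((2 * pi) *\<^sub>R (2 *\<^sub>R Saug)) = (4 * pi) ^ CARD('n) * det Saug"
      by (simp add: det_scaleR_mat power_mult_distrib)
    have "ln (sqrt (det ((2 * pi) *\<^sub>R (2 *\<^sub>R Saug)))) = LA"
      unfolding dt LA_def using detA by (simp add: ln_sqrt ln_mult ln_realpow algebra_simps)
    then show ?thesis unfolding g_def gauss_props(4)[OF pd2] qf by simp
  qed
  have gpos: "g zz > 0" for zz unfolding g_def by (rule gauss_props(1)[OF pd2])
  have mpos: "mixf zz > 0" for zz unfolding mixf_def by (rule mix_facts(1)[OF assms(1,3,4,5)])
  obtain K0 B where KB: "\<And>zz. \<bar>ln (mixf zz)\<bar> \<le> K0 + B * (norm zz)^2"
  proof -
    have "\<exists>K0 B. \<forall>zz. \<bar>ln (mix_term Saug C pic mu Sc zz)\<bar> \<le> K0 + B * (norm zz)^2"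
      by (rule mix_facts(2)) (use assms in auto)
    then show ?thesis using that unfolding mixf_def by blast
  qed
  define FB where "FB zz = K0 * (G.Q zz * 1) + B * ((\<Sum>i\<in>UNIV. G.Q zz * (fst zz $ i * fst zz $ i)) + (\<Sum>i\<in>UNIV. G.Q zz * (snd zz $ i * snd zz $ i)))" for zz
  have intM: "integrable lborel (\<lambda>zz. Q zz * ln (mixf zz))"
  proof (rule Bochner_Integration.integrable_bound[where f=FB])
    have "has_bochner_integral lborel (\<lambda>zz. K0 * (G.Q zz * 1) + B * ((\<Sum>i\<in>UNIV. G.Q zz * (fst zz $ i * fst zz $ i)) + (\<Sum>i\<in>UNIV. G.Q zz * (snd zz $ i * snd zz $ i))))
       (K0 * 1 + B * ((\<Sum>i\<in>UNIV. mx $ i * mx $ i + (if i = i then (sqrt (Sx$i$i))^2 else 0)) + (\<Sum>i\<in>UNIV. mx' $ i * mx' $ i + (if i = i then (sqrt (Sx'$i$i))^2 else 0))))"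
      by (intro has_bochner_integral_add has_bochner_integral_mult_right has_bochner_integral_sum G.E_0 G.M_zz G.M_z'z')
    then show "integrable lborel FB" unfolding FB_def[abs_def]
      by (auto simp: has_bochner_integral_iff)
    have Qm: "Q \<in> borel_measurable lborel"
      using G.E_0 unfolding QQ by (auto dest!: has_bochner_integral_integrable borel_measurable_integrable)
    show "(\<lambda>zz. Q zz * ln (mixf zz)) \<in> borel_measurable lborel"
      using Qm mix_meas[of Saug C pic mu Sc] unfolding mixf_def by measurable
    show "AE zz in lborel. norm (Q zz * ln (mixf zz)) \<le> norm (FB zz)"
      unfolding FB_def
    proof (intro AE_I2)
      fix zz :: "(real^'n)\<times>(real^'n)"
      have e: "K0 * (G.Q zz * 1) + B * ((\<Sum>i\<in>UNIV. G.Q zz * (fst zz $ i * fst zz $ i)) + (\<Sum>i\<in>UNIV. G.Q zz * (snd zz $ i * snd zz $ i)))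
          = Q zz * (K0 + B * (norm zz)^2)"
        unfolding norm_sq_pair QQ by (simp add: sum_distrib_left sum_distrib_right algebra_simps)
      have qp: "Q zz > 0" unfolding QQ by (rule G.Q_pos)
      have "norm (Q zz * ln (mixf zz)) = Q zz * \<bar>ln (mixf zz)\<bar>" using qp by (simp add: abs_mult)
      also have "\<dots> \<le> Q zz * (K0 + B * (norm zz)^2)" using qp KB[of zz] by (simp add: mult_left_mono)
      also have "\<dots> \<le> norm (Q zz * (K0 + B * (norm zz)^2))" by simp
      finally show "norm (Q zz * ln (mixf zz)) \<le> norm (K0 * (G.Q zz * 1) + B * ((\<Sum>i\<in>UNIV. G.Q zz * (fst zz $ i * fst zz $ i)) + (\<Sum>i\<in>UNIV. G.Q zz * (snd zz $ i * snd zz $ i))))"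
        unfolding e .
    qed
  qed
  define EM where "EM = (\<integral>zz. Q zz * ln (mixf zz) \<partial>lborel)"
  define VQ where "VQ = (\<Sum>i\<in>UNIV. - ln (sqrt (2 * pi * (sqrt (Sx$i$i))^2)) - 1/2) + (\<Sum>i\<in>UNIV. - ln (sqrt (2 * pi * (sqrt (Sx'$i$i))^2)) - 1/2)"
  define VA where "VA = (mx - mx') \<bullet> (Ai *v (mx - mx')) + (\<Sum>i\<in>UNIV. Ai$i$i * ((sqrt (Sx$i$i))^2 + (sqrt (Sx'$i$i))^2))"
  have feq: "(\<lambda>zz. Q zz * (ln (Q zz) - ln (prior_psi Saug C pic mu Sc zz))) =
     (\<lambda>zz. G.Q zz * ln (G.Q zz) + (1/4) * (G.Q zz * ((fst zz - snd zz) \<bullet> (Ai *v (fst zz - snd zz)))) + LA * (G.Q zz * 1) - Q zz * ln (mixf zz))"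
  proof (rule ext)
    fix zz
    define qv where "qv = (fst zz - snd zz) \<bullet> (Ai *v (fst zz - snd zz))"
    have "ln (prior_psi Saug C pic mu Sc zz) = ln (g zz) + ln (mixf zz)"
      unfolding prior_eq using gpos[of zz] mpos[of zz] by (simp add: ln_mult)
    then have lp: "ln (prior_psi Saug C pic mu Sc zz) = - (1/4) * qv - LA + ln (mixf zz)"
      unfolding lng qv_def by simp
    show "Q zz * (ln (Q zz) - ln (prior_psi Saug C pic mu Sc zz)) =
      G.Q zz * ln (G.Q zz) + (1/4) * (G.Q zz * ((fst zz - snd zz) \<bullet> (Ai *v (fst zz - snd zz)))) + LA * (G.Q zz * 1) - Q zz * ln (mixf zz)"
      unfolding lp qv_def[symmetric] QQ by (simp add: algebra_simps)
  qed
  have HB: "has_bochner_integral lborel (\<lambda>zz. Q zz * (ln (Q zz) - ln (prior_psi Saug C pic mu Sc zz)))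
      (VQ + (1/4) * VA + LA * 1 - EM)"
    unfolding feq VQ_def VA_def EM_def
    by (intro has_bochner_integral_diff has_bochner_integral_add has_bochner_integral_mult_right
        G.E_lnQ G.E_quad G.E_0 hbi[OF intM refl])
  have KL: "KL_div Q (prior_psi Saug C pic mu Sc) = VQ + (1/4) * VA + LA - EM"
    unfolding KL_div_def expect_def using has_bochner_integral_integral_eq[OF HB] by simp
  have VQ: "VQ = - (1/2) * (?d * ln (2 * pi) + ln (det Sx)) - ?d / 2 - (1/2) * (?d * ln (2 * pi) + ln (det Sx')) - ?d / 2"
    unfolding VQ_def diag_entropy_sum[OF assms(6)] diag_entropy_sum[OF assms(7)] by simp
  have VA: "VA = trace (matrix_inv Saug ** (Sx + Sx')) + (mx - mx') \<bullet> (matrix_inv Saug *v (mx - mx'))"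
    unfolding VA_def trace_diag[OF assms(6,7)] Ai_def by simp
  have EMe: "expect Q (\<lambda>zz. ln (mix_term Saug C pic mu Sc zz)) = EM"
    unfolding expect_def EM_def mixf_def ..
  have l4: "ln (4 * pi) = 2 * ln 2 + ln pi" by (simp add: ln_mult flip: ln_realpow[of 2 2, simplified])
  have l2: "ln (2 * pi) = ln 2 + ln pi" by (simp add: ln_mult)
  show ?thesis
    unfolding elbo_def Q_def[symmetric] KL EMe VQ VA LA_def l4 l2
    by (simp add: algebra_simps)
qed

end
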